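(* Let $d=(d_1,\dots,d_n)$ be a degree sequence in nonincreasing order and let $e$ be obtained from $d$ by a unit transformation at indices $r<t$: $e_r=d_r-1$, $e_t=d_t+1$, $e_i=d_i$ for $i\notin\{r,t\}$, where $d_r\ge d_t+2$, $t$ is the first index after $r$ with $d_t\le d_r-2$, and $r$ is the last index before $t$ with $d_r\ge d_t+2$ (a trailing $0$ is appended to $d$ if needed, so $d$ and $e$ both have $n$ terms; then $e$ is again nonincreasing). Define $j_r=d_r+1$ if $d_r\ge r$ and $j_r=d_r$ if $d_r<r$; and $j_t=d_t+2$ if $d_t\ge t-1$ and $j_t=d_t+1$ if $d_t<t-1$. For an integer $k$, let $c_1(k)$ be the number of elements of the multiset $\{r,j_t\}$ that are $\le k$ (counted with multiplicity), and $c_{-1}(k)$ the number of elements of the multiset $\{t,j_r\}$ that are $\le k$ (counted with multiplicity). Then: (a) for every $k\le\min\{m(d),m(e)\}$, $\Delta_k(e)=\Delta_k(d)+c_1(k)-c_{-1}(k)$; (b) if $m(e)>m(d)$, then $\Delta_{m(e)}(e)=\Delta_{m(d)}(d)+2$.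
   Context: Degree sequences (of finite simple graphs, terms may be $0$) are listed in nonincreasing order. $m(d)=\max\{i : d_i\ge i-1\}$. For integers $k\ge 0$, $\Delta_k(d)=k(k-1)+\sum_{i>k}\min\{k,d_i\}-\sum_{i\le k}d_i$. *)

theory Defs
  imports Main
begin

text \<open>A sequence with n terms is a function d :: nat => nat, of which only the
values d 1, ..., d n (1-indexed) are relevant.\<close>

definition nonincr_seq :: "nat \<Rightarrow> (nat \<Rightarrow> nat) \<Rightarrow> bool" where
  "nonincr_seq n d \<longleftrightarrow> (\<forall>i j. 1 \<le> i \<longrightarrow> i \<le> j \<longrightarrow> j \<le> n \<longrightarrow> d j \<le> d i)"

definition graphic_seq :: "nat \<Rightarrow> (nat \<Rightarrow> nat) \<Rightarrow> bool" where
  "graphic_seq n d \<longleftrightarrow> (\<exists>E :: nat \<Rightarrow> nat \<Rightarrow> bool.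
      (\<forall>i j. E i j \<longrightarrow> i \<in> {1..n} \<and> j \<in> {1..n}) \<and>
      (\<forall>i j. E i j \<longrightarrow> E j i) \<and> (\<forall>i. \<not> E i i) \<and>
      (\<forall>i \<in> {1..n}. card {j \<in> {1..n}. E i j} = d i))"

definition degseq :: "nat \<Rightarrow> (nat \<Rightarrow> nat) \<Rightarrow> bool" where
  "degseq n d \<longleftrightarrow> nonincr_seq n d \<and> graphic_seq n d"

definition mval :: "nat \<Rightarrow> (nat \<Rightarrow> nat) \<Rightarrow> nat" where
  "mval n d = Max {i \<in> {1..n}. int (d i) \<ge> int i - 1}"

definition Delta :: "nat \<Rightarrow> (nat \<Rightarrow> nat) \<Rightarrow> nat \<Rightarrow> int" where
  "Delta n d k = int k * (int k - 1) + (\<Sum>i\<in>{k<..n}. int (min k (d i)))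
                  - (\<Sum>i\<in>{1..k}. int (d i))"

end

theory Submission imports Defs begin
lemma L2:
  fixes h h' :: "nat \<Rightarrow> int"
  assumes "finite A" "a \<noteq> b" "\<And>i. i \<noteq> a \<Longrightarrow> i \<noteq> b \<Longrightarrow> h i = h' i"
  shows "sum h A = sum h' A + (if a \<in> A then h a - h' a else 0) + (if b \<in> A then h b - h' b else 0)"
proof -
  have "sum (\<lambda>i. h i - h' i) A = sum (\<lambda>i. h i - h' i) (A \<inter> {a,b})"
    using assms by (intro sum.mono_neutral_right) auto
  also have "\<dots> = (if a \<in> A then h a - h' a else 0) + (if b \<in> A then h b - h' b else 0)"
    using assms(2) by (cases "a \<in> A"; cases "b \<in> A") (auto simp: Int_insert_right)
  finally show ?thesis by (simp add: sum_subtractf)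
qed

lemma Dform:
  fixes n r t k :: nat and d e :: "nat \<Rightarrow> nat"
  assumes "1 \<le> r" "r < t" "t \<le> n" "d r \<ge> 1"
    and he: "e = d(r := d r - 1, t := d t + 1)"
  shows "Delta n e k = Delta n d k + (if r \<le> k then 1 else 0) - (if t \<le> k then 1 else 0)
     - (if k < r \<and> d r \<le> k then 1 else 0) + (if k < t \<and> d t + 1 \<le> k then 1 else 0)"
proof -
  have rt: "r \<noteq> t" using assms by simp
  have er: "e r = d r - 1" and et: "e t = d t + 1" and eo: "\<And>i. i \<noteq> r \<Longrightarrow> i \<noteq> t \<Longrightarrow> e i = d i"
    using he rt by auto
  have s1: "(\<Sum>i\<in>{k<..n}. int (min k (e i))) = (\<Sum>i\<in>{k<..n}. int (min k (d i)))
     + (if r \<in> {k<..n} then int (min k (e r)) - int (min k (d r)) else 0)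
     + (if t \<in> {k<..n} then int (min k (e t)) - int (min k (d t)) else 0)"
    by (rule L2) (use rt eo in auto)
  have s2: "(\<Sum>i\<in>{1..k}. int (e i)) = (\<Sum>i\<in>{1..k}. int (d i))
     + (if r \<in> {1..k} then int (e r) - int (d r) else 0)
     + (if t \<in> {1..k} then int (e t) - int (d t) else 0)"
    by (rule L2) (use rt eo in auto)
  show ?thesis unfolding Delta_def s1 s2 er et using assms by (auto simp: min_def)
qed

theorem lemma14:
  fixes n r t :: nat and d e :: "nat \<Rightarrow> nat"
  assumes hd: "degseq n d"
    and hrt: "1 \<le> r" "r < t" "t \<le> n"
    and hgap: "d r \<ge> d t + 2"
    and hfirst: "\<forall>i. r < i \<and> i < t \<longrightarrow> \<not> (d i + 2 \<le> d r)"
    and hlast: "\<forall>i. r < i \<and> i < t \<longrightarrow> \<not> (d i \<ge> d t + 2)"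
    and he: "e = d(r := d r - 1, t := d t + 1)"
  shows
    "let jr = (if d r \<ge> r then d r + 1 else d r);
         jt = (if int (d t) \<ge> int t - 1 then d t + 2 else d t + 1);
         c1 = (\<lambda>k::nat. (if r \<le> k then 1 else 0) + (if jt \<le> k then 1 else 0) :: int);
         cm1 = (\<lambda>k::nat. (if t \<le> k then 1 else 0) + (if jr \<le> k then 1 else 0) :: int)
     in (\<forall>k. k \<le> min (mval n d) (mval n e) \<longrightarrow> Delta n e k = Delta n d k + c1 k - cm1 k)
        \<and> (mval n e > mval n d \<longrightarrow> Delta n e (mval n e) = Delta n d (mval n d) + 2)"
proof -
  have rt: "r \<noteq> t" using hrt by simp
  have er: "e r = d r - 1" and et: "e t = d t + 1" and eo: "\<And>i. i \<noteq> r \<Longrightarrow> i \<noteq> t \<Longrightarrow> e i = d i"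
    using he rt by auto
  from hd have mono: "\<And>i j. 1 \<le> i \<Longrightarrow> i \<le> j \<Longrightarrow> j \<le> n \<Longrightarrow> d j \<le> d i"
    by (auto simp: degseq_def nonincr_seq_def)
  have mid: "\<And>i. r < i \<Longrightarrow> i < t \<Longrightarrow> d i + 1 = d r \<and> d i = d t + 1"
  proof -
    fix i assume a: "r < i" "i < t"
    have "d i \<le> d r" using mono[of r i] a hrt by auto
    moreover have "d t \<le> d i" using mono[of i t] a hrt by auto
    ultimately show "d i + 1 = d r \<and> d i = d t + 1" using hfirst hlast a hgap by force
  qed
  have emono: "\<And>i j. 1 \<le> i \<Longrightarrow> i \<le> j \<Longrightarrow> j \<le> n \<Longrightarrow> e j \<le> e i"
  proof -
    fix i j assume a: "1 \<le> i" "i \<le> j" "j \<le> n"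
    have dij: "d j \<le> d i" using mono a by auto
    show "e j \<le> e i"
    proof (cases "j = t")
      case True
      show ?thesis
      proof (cases "i = t")
        case False
        then have "i < t" using a True by simp
        then consider "i = r" | "i < r" | "r < i" by linarith
        then show ?thesis
        proof cases
          case 1 then show ?thesis using True er et hgap by simp
        next
          case 2 then show ?thesis using True et eo[of i] mono[of i r] hgap a hrt rt by auto
        next
          case 3 then show ?thesis using True et eo[of i] mid[of i] \<open>i < t\<close> by auto
        qed
      qed (use True in simp)
    next
      case jt: False
      show ?thesis
      proof (cases "i = r")
        case True
        show ?thesis
        proof (cases "j = r")
          case False
          then have "r < j" using a True by simp
          then consider "j < t" | "t < j" using jt by linarith
          then show ?thesis
          proof cases
            case 1 then show ?thesis using True er eo[of j] mid[of j] \<open>r < j\<close> jt by auto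
          next
            case 2 then show ?thesis using True er eo[of j] mono[of t j] hgap a hrt jt \<open>r<j\<close> by auto
          qed
        qed (use True in simp)
      next
        case False
        have "e j \<le> d j" using jt eo[of j] er by (cases "j = r") auto
        moreover have "d i \<le> e i" using False eo[of i] et by (cases "i = t") auto
        ultimately show ?thesis using dij by linarith
      qed
    qed
  qed
  have n1: "1 \<le> n" using hrt by simp
  have mem: "\<And>f. mval n f \<in> {i\<in>{1..n}. int (f i) \<ge> int i - 1}"
    unfolding mval_def by (rule Max_in) (use n1 in auto)
  have maxle: "\<And>f i. i \<in> {1..n} \<Longrightarrow> int (f i) \<ge> int i - 1 \<Longrightarrow> i \<le> mval n f"
    unfolding mval_def by (rule Max_ge) auto
  have dk: "\<And>k. 1 \<le> k \<Longrightarrow> k \<le> mval n d \<Longrightarrow> int (d k) \<ge> int k - 1"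
  proof -
    fix k assume a: "1 \<le> k" "k \<le> mval n d"
    have "d (mval n d) \<le> d k" using mono[of k "mval n d"] a mem[of d] by auto
    then show "int (d k) \<ge> int k - 1" using mem[of d] a by auto
  qed
  have ek: "\<And>k. 1 \<le> k \<Longrightarrow> k \<le> mval n e \<Longrightarrow> int (e k) \<ge> int k - 1"
  proof -
    fix k assume a: "1 \<le> k" "k \<le> mval n e"
    have "e (mval n e) \<le> e k" using emono[of k "mval n e"] a mem[of e] by auto
    then show "int (e k) \<ge> int k - 1" using mem[of e] a by auto
  qed
  have D: "\<And>k. Delta n e k = Delta n d k + (if r \<le> k then 1 else 0) - (if t \<le> k then 1 else 0)
     - (if k < r \<and> d r \<le> k then 1 else 0) + (if k < t \<and> d t + 1 \<le> k then 1 else 0)"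
    by (rule Dform) (use hrt hgap he in auto)
  define jr where "jr = (if d r \<ge> r then d r + 1 else d r)"
  define jt where "jt = (if int (d t) \<ge> int t - 1 then d t + 2 else d t + 1)"
  have A: "(\<forall>k. k \<le> min (mval n d) (mval n e) \<longrightarrow> Delta n e k = Delta n d k
     + ((if r \<le> k then 1 else 0) + (if jt \<le> k then 1 else 0))
     - ((if t \<le> k then 1 else 0) + (if jr \<le> k then 1 else 0)))"
  proof (intro allI impI)
    fix k assume km: "k \<le> min (mval n d) (mval n e)"
    show "Delta n e k = Delta n d k
     + ((if r \<le> k then 1 else 0) + (if jt \<le> k then 1 else 0))
     - ((if t \<le> k then 1 else 0) + (if jr \<le> k then 1 else 0))"
    proof (cases "k = 0")
      case True then show ?thesis using D[of k] hrt by (simp add: jr_def jt_def)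
    next
      case False
      have dkk: "int (d k) \<ge> int k - 1" using dk[of k] km False by simp
      have ekk: "int (e k) \<ge> int k - 1" using ek[of k] km False by simp
      have kn: "k \<le> n" using km mem[of d] by auto
      have JA: "(if jr \<le> k then 1 else 0) = (if k < r \<and> d r \<le> k then 1 else (0::int))"
      proof (cases "d r \<ge> r")
        case True
        have "\<not> d r + 1 \<le> k"
        proof
          assume c: "d r + 1 \<le> k"
          then have "r < k" using True by simp
          then have "d k \<le> d r" using mono[of r k] hrt kn by simp
          then have eq: "d r + 1 = k" using c dkk by linarith
          have "t > k"
          proof (rule ccontr)
            assume "\<not> t > k"
            then have "d k \<le> d t" using mono[of t k] hrt kn by simp
            then show False using dkk hgap eq by linarith
          qed
          then have "d (r+1) \<le> d t + 1" using mid[of "r+1"] \<open>r < k\<close> by simp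
          moreover have "d k \<le> d (r+1)" using mono[of "r+1" k] \<open>r<k\<close> kn by simp
          ultimately show False using dkk hgap eq by linarith
        qed
        then show ?thesis using True by (auto simp: jr_def)
      next
        case False
        have "\<not> (r \<le> k \<and> d r \<le> k)"
        proof
          assume "r \<le> k \<and> d r \<le> k"
          then have c: "r \<le> k" "d r \<le> k" by auto
          have "d k \<le> d r" using mono[of r k] hrt kn c by simp
          have "r = k" using False c dkk \<open>d k \<le> d r\<close> by linarith
          then show False using ekk er dkk \<open>d k \<le> d r\<close> False hgap by simp
        qed
        then show ?thesis using False by (auto simp: jr_def)
      qed
      have JB: "(if jt \<le> k then 1 else 0) = (if k < t \<and> d t + 1 \<le> k then 1 else (0::int))"
      proof (cases "int (d t) \<ge> int t - 1")
        case True
        have "\<not> d t + 2 \<le> k"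
        proof
          assume c: "d t + 2 \<le> k"
          show False
          proof (cases "t \<le> k")
            case True
            then have "d k \<le> d t" using mono[of t k] hrt kn by simp
            then show False using c dkk by linarith
          next
            case False then show False using c \<open>int (d t) \<ge> int t - 1\<close> by linarith
          qed
        qed
        moreover have "\<not> (k < t \<and> d t + 1 \<le> k)" using True by linarith
        ultimately show ?thesis using True by (auto simp: jt_def)
      next
        case False
        have "\<not> t \<le> k"
        proof
          assume "t \<le> k"
          then have "d k \<le> d t" using mono[of t k] hrt kn by simp
          then show False using False dkk \<open>t \<le> k\<close> by linarith
        qed
        then show ?thesis using False by (auto simp: jt_def)
      qed
      show ?thesis using D[of k] JA JB by simp
    qed
  qed
  have B: "mval n e > mval n d \<longrightarrow> Delta n e (mval n e) = Delta n d (mval n d) + 2"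
  proof
    assume gt: "mval n e > mval n d"
    let ?q = "mval n e"
    have qin: "?q \<in> {1..n}" "int (e ?q) \<ge> int ?q - 1" using mem[of e] by auto
    have qnd: "\<not> int (d ?q) \<ge> int ?q - 1" using maxle[of ?q d] qin gt by auto
    have qt: "?q = t"
    proof (rule ccontr)
      assume "?q \<noteq> t"
      then have "e ?q \<le> d ?q" using eo[of ?q] er by (cases "?q = r") auto
      then show False using qin qnd by linarith
    qed
    have dt: "d t + 2 = t" using qin qnd qt et by simp
    have t1: "t - 1 \<in> {1..n}" "int (d (t-1)) \<ge> int (t-1) - 1"
    proof -
      show "t - 1 \<in> {1..n}" using hrt by auto
      show "int (d (t-1)) \<ge> int (t-1) - 1"
      proof (cases "t - 1 = r")
        case True then show ?thesis using hgap dt by simp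
      next
        case False then show ?thesis using mid[of "t-1"] hrt dt by simp
      qed
    qed
    have p: "mval n d = t - 1" using maxle[of "t-1" d, OF t1] gt qt by simp
    have E1: "Delta n e t = Delta n d t" using D[of t] hrt by simp
    have split1: "{t-1<..n} = insert t {t<..n}" using hrt by auto
    have split2: "{1..t} = insert t {1..t-1}" using hrt by auto
    have small: "\<And>i. i \<in> {t<..n} \<Longrightarrow> d i \<le> t - 2"
      using mono[of t] hrt dt by (metis greaterThanAtMost_iff diff_add_inverse2 less_imp_le_nat order_trans add_le_imp_le_diff)
    have s3: "(\<Sum>i\<in>{t<..n}. int (min t (d i))) = (\<Sum>i\<in>{t<..n}. int (d i))"
    proof (rule sum.cong)
      fix x assume "x \<in> {t<..n}"
      then have "d x \<le> t - 2" by (rule small)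
      then show "int (min t (d x)) = int (d x)" by simp
    qed simp
    have s4: "(\<Sum>i\<in>{t<..n}. int (min (t-1) (d i))) = (\<Sum>i\<in>{t<..n}. int (d i))"
    proof (rule sum.cong)
      fix x assume "x \<in> {t<..n}"
      then have "d x \<le> t - 2" by (rule small)
      then show "int (min (t-1) (d x)) = int (d x)" by simp
    qed simp
    have "Delta n d t = Delta n d (t - 1) + 2"
      unfolding Delta_def split1 split2 using s3 s4 dt hrt
      by (simp add: algebra_simps of_nat_diff)
    then show "Delta n e (mval n e) = Delta n d (mval n d) + 2" using E1 p qt by simp
  qed
  show ?thesis unfolding Let_def using A B by (simp add: jr_def jt_def)
qed

end
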